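(* Let $\mathbb{F}\in\{\mathbb{R},\mathbb{C}\}$, let $k\in\{1,\dots,n\}$ be an integer and let $r>0$. Suppose $\boldsymbol A\in\mathbb{F}^{m\times n}$ satisfies the phaseless bi-Lipschitz condition on $\mathcal X=\{\boldsymbol x\in\mathbb{F}^n:\|\boldsymbol x\|_0\le(r+4)k\}$ with positive constants $L,U$, and $r>2(U/L)^2$. Then for all $\boldsymbol x\in\mathbb{F}^n$, all $\eta\ge0$, all $\boldsymbol e\in\mathbb{R}^m$ with $\|\boldsymbol e\|_2\le\eta$, and any $\boldsymbol x^\#\in\Delta_{1,\eta}(|\boldsymbol A\boldsymbol x|+\boldsymbol e)$, \[ \mathrm{dist}_1(\boldsymbol x^\#,\boldsymbol x)\le C_1\,\sigma_k(\boldsymbol x)_1+D_1\sqrt k\,\eta,\qquad \mathrm{dist}(\boldsymbol x^\#,\boldsymbol x)\le C_2\,\frac{\sigma_k(\boldsymbol x)_1}{\sqrt k}+D_2\,\eta, \] where \[ C_1=\frac{2\frac UL\big(r^{-1/2}+1\big)(2+r)^{1/2}}{1-\frac UL(2/r)^{1/2}}+2,\quad D_1=\frac1L\cdot\frac{2(2+r)^{1/2}}{1-\frac UL(2/r)^{1/2}}, \] \[ C_2=\frac{\frac UL\big(r^{-1/2}+1\big)\big(1+(r/2)^{-1/2}\big)}{1-\frac UL(2/r)^{1/2}}+r^{-1/2}+1,\quad D_2=\frac1L\cdot\frac{2\big(1+(r/2)^{-1/2}\big)}{1-\frac UL(2/r)^{1/2}}. \]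
   Context: $\mathbb{F}\in\{\mathbb{R},\mathbb{C}\}$. $\|\boldsymbol u\|_q$ is the usual $\ell_q$ norm, $\|\boldsymbol u\|_0$ the number of nonzero entries, $|\boldsymbol u|$ the vector of entrywise moduli. $\mathrm{dist}_q(\boldsymbol x,\boldsymbol y)=\min_{c\in\mathbb{F},|c|=1}\|\boldsymbol x-c\boldsymbol y\|_q$, $\mathrm{dist}=\mathrm{dist}_2$. $\Sigma_k=\{\boldsymbol z\in\mathbb{F}^n:\|\boldsymbol z\|_0\le k\}$, $\sigma_k(\boldsymbol x)_q=\min_{\boldsymbol z\in\Sigma_k}\mathrm{dist}_q(\boldsymbol x,\boldsymbol z)$. $\boldsymbol A$ satisfies the phaseless bi-Lipschitz condition on $\mathcal X$ with positive constants $L,U$ if $L\,\mathrm{dist}(\boldsymbol x,\boldsymbol y)\le\||\boldsymbol A\boldsymbol x|-|\boldsymbol A\boldsymbol y|\|_2\le U\,\mathrm{dist}(\boldsymbol x,\boldsymbol y)$ for all $\boldsymbol x,\boldsymbol y\in\mathcal X$. $\Delta_{1,\eta}(\boldsymbol y)=\operatorname{argmin}_{\boldsymbol z\in\mathbb{F}^n}\{\|\boldsymbol z\|_1:\||\boldsymbol A\boldsymbol z|-\boldsymbol y\|_2\le\eta\}$. *)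

theory Defs
  imports "HOL-Analysis.Analysis"
begin

text \<open>Vectors in F^n are modelled as 'a^'n with index type 'n (n = CARD('n)),
  matrices in F^{m x n} as 'a^'n^'m; F is instantiated to real and to complex.\<close>

definition l1norm :: "'a::real_normed_vector ^ 'n \<Rightarrow> real" where
  "l1norm x = (\<Sum>i\<in>UNIV. norm (x $ i))"

definition l2norm :: "'a::real_normed_vector ^ 'n \<Rightarrow> real" where
  "l2norm x = sqrt (\<Sum>i\<in>UNIV. (norm (x $ i))^2)"

definition l0norm :: "'a::zero ^ 'n \<Rightarrow> nat" where
  "l0norm x = card {i. x $ i \<noteq> 0}"

definition absAx :: "'a::real_normed_field ^ 'n ^ 'm \<Rightarrow> 'a ^ 'n \<Rightarrow> real ^ 'm" where
  "absAx A x = (\<chi> i. norm ((A *v x) $ i))"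

definition pdist :: "('a::real_normed_field ^ 'n \<Rightarrow> real) \<Rightarrow> 'a ^ 'n \<Rightarrow> 'a ^ 'n \<Rightarrow> real" where
  "pdist N x y = Inf ((\<lambda>c. N (x - c *s y)) ` {c. norm c = 1})"

definition sigma1 :: "nat \<Rightarrow> 'a::real_normed_field ^ 'n \<Rightarrow> real" where
  "sigma1 k x = Inf ((\<lambda>z. pdist l1norm x z) ` {z. l0norm z \<le> k})"

definition phaseless_biLip ::
  "'a::real_normed_field ^ 'n ^ 'm \<Rightarrow> ('a ^ 'n) set \<Rightarrow> real \<Rightarrow> real \<Rightarrow> bool" where
  "phaseless_biLip A X L U \<longleftrightarrow> L > 0 \<and> U > 0 \<and>
     (\<forall>x\<in>X. \<forall>y\<in>X. L * pdist l2norm x y \<le> l2norm (absAx A x - absAx A y)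
                  \<and> l2norm (absAx A x - absAx A y) \<le> U * pdist l2norm x y)"

definition Delta1 :: "'a::real_normed_field ^ 'n ^ 'm \<Rightarrow> real \<Rightarrow> real ^ 'm \<Rightarrow> ('a ^ 'n) set" where
  "Delta1 A \<eta> y = {z. l2norm (absAx A z - y) \<le> \<eta> \<and>
      (\<forall>w. l2norm (absAx A w - y) \<le> \<eta> \<longrightarrow> l1norm z \<le> l1norm w)}"

definition corC1 :: "real \<Rightarrow> real \<Rightarrow> real \<Rightarrow> real" where
  "corC1 r L U = 2 * (U/L) * (1 / sqrt r + 1) * sqrt (2 + r) / (1 - (U/L) * sqrt (2/r)) + 2"

definition corD1 :: "real \<Rightarrow> real \<Rightarrow> real \<Rightarrow> real" where
  "corD1 r L U = (1/L) * (2 * sqrt (2 + r) / (1 - (U/L) * sqrt (2/r)))"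

definition corC2 :: "real \<Rightarrow> real \<Rightarrow> real \<Rightarrow> real" where
  "corC2 r L U = (U/L) * (1 / sqrt r + 1) * (1 + 1 / sqrt (r/2)) / (1 - (U/L) * sqrt (2/r))
                 + 1 / sqrt r + 1"

definition corD2 :: "real \<Rightarrow> real \<Rightarrow> real \<Rightarrow> real" where
  "corD2 r L U = (1/L) * (2 * (1 + 1 / sqrt (r/2)) / (1 - (U/L) * sqrt (2/r)))"

end

theory Submission
  imports Defs
begin


definition restr :: "'n set \<Rightarrow> 'a::zero ^ 'n \<Rightarrow> 'a ^ 'n" where
  "restr S w = (\<chi> i. if i \<in> S then w $ i else 0)"

lemma restr_nth [simp]: "restr S w $ i = (if i \<in> S then w $ i else 0)"
  by (simp add: restr_def)

lemma l2norm_eq: "l2norm (x :: 'a::real_normed_vector ^ 'n) = norm x"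
  by (simp add: l2norm_def norm_vec_def L2_set_def)

lemma l1norm_restr:
  fixes w :: "'a::real_normed_vector ^ 'n"
  shows "l1norm (restr S w) = (\<Sum>i\<in>S. norm (w $ i))"
proof -
  have "l1norm (restr S w) = (\<Sum>i\<in>UNIV. if i \<in> S then norm (w $ i) else 0)"
    unfolding l1norm_def by (intro sum.cong) auto
  also have "\<dots> = (\<Sum>i\<in>S. norm (w $ i))"
    by (simp add: sum.If_cases)
  finally show ?thesis .
qed

lemma l1norm_split:
  fixes w :: "'a::real_normed_vector ^ 'n"
  shows "l1norm w = (\<Sum>i\<in>S. norm (w $ i)) + (\<Sum>i\<in>-S. norm (w $ i))"
proof -
  have "UNIV = S \<union> -S" by auto
  then have "l1norm w = (\<Sum>i\<in>S \<union> -S. norm (w $ i))" unfolding l1norm_def by simp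
  also have "\<dots> = (\<Sum>i\<in>S. norm (w $ i)) + (\<Sum>i\<in>-S. norm (w $ i))"
    by (rule sum.union_disjoint) auto
  finally show ?thesis .
qed

lemma norm_restr_sq:
  fixes w :: "'a::real_normed_vector ^ 'n"
  shows "(norm (restr S w))^2 = (\<Sum>i\<in>S. (norm (w $ i))^2)"
proof -
  have "(norm (restr S w))^2 = (\<Sum>i\<in>UNIV. (norm (restr S w $ i))^2)"
    by (simp add: norm_vec_def L2_set_def sum_nonneg)
  also have "\<dots> = (\<Sum>i\<in>UNIV. if i \<in> S then (norm (w $ i))^2 else 0)"
    by (intro sum.cong) auto
  also have "\<dots> = (\<Sum>i\<in>S. (norm (w $ i))^2)"
    by (simp add: sum.If_cases)
  finally show ?thesis .
qed

lemma l0norm_restr: "l0norm (restr S w) \<le> card S"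
  unfolding l0norm_def by (rule card_mono) auto

lemma sum_le_sqrt_card:
  fixes f :: "'n::finite \<Rightarrow> real"
  assumes "\<And>i. f i \<ge> 0"
  shows "(\<Sum>i\<in>S. f i) \<le> sqrt (card S) * sqrt (\<Sum>i\<in>S. (f i)^2)"
proof -
  have "(\<Sum>i\<in>S. \<bar>f i\<bar> * \<bar>1\<bar>) \<le> L2_set f S * L2_set (\<lambda>_. 1) S"
    by (rule L2_set_mult_ineq)
  thus ?thesis using assms by (simp add: L2_set_def L2_set_constant[where y=1] mult.commute)
qed

lemma absAx_l2: "l2norm (absAx A x) = norm (A *v x)"
  by (simp add: l2norm_def absAx_def norm_vec_def L2_set_def)

lemma absAx_diff: "l2norm (absAx A x - absAx A y) \<le> norm (A *v (x - y))"
proof -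
  have "l2norm (absAx A x - absAx A y) = norm (absAx A x - absAx A y)" by (rule l2norm_eq)
  also have "\<dots> \<le> norm (A *v x - A *v y)"
    by (rule norm_le_componentwise_cart) (simp add: absAx_def norm_triangle_ineq3)
  finally show ?thesis by (simp add: matrix_vector_mult_diff_distrib)
qed



lemma exists_max_set:
  fixes f :: "'n::finite \<Rightarrow> real"
  obtains T where "card T \<le> s" "\<And>T'. card T' \<le> s \<Longrightarrow> (\<Sum>i\<in>T'. f i) \<le> (\<Sum>i\<in>T. f i)"
proof -
  let ?F = "{T :: 'n set. card T \<le> s}"
  have fin: "finite ((\<lambda>T. \<Sum>i\<in>T. f i) ` ?F)" by simp
  have ne: "(\<lambda>T. \<Sum>i\<in>T. f i) ` ?F \<noteq> {}" by (auto intro!: exI[of _ "{}"])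
  obtain T where T: "T \<in> ?F" "(\<Sum>i\<in>T. f i) = Max ((\<lambda>T. \<Sum>i\<in>T. f i) ` ?F)"
    using Max_in[OF fin ne] by auto
  show ?thesis
    by (rule that[of T]) (use T Max_ge[OF fin] in auto)
qed

lemma top_set:
  fixes f :: "'n::finite \<Rightarrow> real"
  assumes "card T \<le> s" "\<And>T'. card T' \<le> s \<Longrightarrow> (\<Sum>i\<in>T'. f i) \<le> (\<Sum>i\<in>T. f i)"
  shows top_set_small: "card T < s \<Longrightarrow> j \<notin> T \<Longrightarrow> f j \<le> 0"
    and top_set_swap: "i \<in> T \<Longrightarrow> j \<notin> T \<Longrightarrow> f j \<le> f i"
proof -
  assume "card T < s" "j \<notin> T"
  then have "card (insert j T) \<le> s" by simp
  from assms(2)[OF this] \<open>j \<notin> T\<close> show "f j \<le> 0" by simp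
next
  assume ij: "i \<in> T" "j \<notin> T"
  let ?T = "insert j (T - {i})"
  have "card ?T = card T" using ij by (simp add: card_Diff_singleton) 
    (metis One_nat_def Suc_pred card_gt_0_iff empty_iff finite)
  then have "(\<Sum>k\<in>?T. f k) \<le> (\<Sum>k\<in>T. f k)" using assms by simp
  moreover have "(\<Sum>k\<in>?T. f k) = f j + (\<Sum>k\<in>T. f k) - f i"
    using ij by (simp add: sum_diff1)
  ultimately show "f j \<le> f i" by simp
qed



lemma split_top:
  fixes w :: "'a::real_normed_vector^'n"
  obtains T where "card T \<le> s" "\<And>j. real s * norm (restr (-T) w $ j) \<le> (\<Sum>i\<in>T. norm (w$i))"
proof -
  obtain T where T: "card T \<le> s" "\<And>T'. card T' \<le> s \<Longrightarrow> (\<Sum>i\<in>T'. norm (w$i)) \<le> (\<Sum>i\<in>T. norm (w$i))"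
    using exists_max_set by blast
  show ?thesis
  proof (rule that[OF T(1)])
    fix j
    show "real s * norm (restr (-T) w $ j) \<le> (\<Sum>i\<in>T. norm (w$i))"
    proof (cases "j \<in> T")
      case True then show ?thesis by (simp add: sum_nonneg)
    next
      case False
      show ?thesis
      proof (cases "card T < s")
        case True
        with top_set_small[OF T, of j] False show ?thesis by (simp add: sum_nonneg)
      next
        case False2: False
        then have cT: "card T = s" using T(1) by simp
        have "(\<Sum>i\<in>T. norm (w$j)) \<le> (\<Sum>i\<in>T. norm (w$i))"
          by (rule sum_mono) (use top_set_swap[OF T] False in auto)
        then show ?thesis using False cT by simp
      qed
    qed
  qed
qed

lemma shelling:
  fixes A :: "'a::real_normed_field ^'n^'m"
  assumes s: "s \<ge> 1" and U: "U \<ge> 0"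
    and sp: "\<And>z. l0norm z \<le> s \<Longrightarrow> norm (A *v z) \<le> U * norm z"
  shows "(\<And>i. real s * norm (w $ i) \<le> b) \<Longrightarrow> norm (A *v w) * sqrt s \<le> U * (b + l1norm w)"
proof (induction "l0norm w" arbitrary: w b rule: less_induct)
  case less
  have b0: "b \<ge> 0" using less.prems[of undefined] by (smt (verit) mult_nonneg_nonneg norm_ge_zero of_nat_0_le_iff)
  have l10: "l1norm w \<ge> 0" unfolding l1norm_def by (simp add: sum_nonneg)
  have sq: "sqrt (real s) > 0" using s by simp
  show ?case
  proof (cases "l0norm w \<le> s")
    case True
    have "(norm w)^2 = (\<Sum>i\<in>UNIV. (norm (w$i))^2)"
      by (simp add: norm_vec_def L2_set_def sum_nonneg)
    also have "\<dots> \<le> (\<Sum>i\<in>UNIV. norm (w$i) * (b / s))"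
    proof (rule sum_mono)
      fix i
      have h1: "norm (w$i) \<le> b / s" using less.prems[of i] s by (simp add: field_simps)
      show "(norm (w$i))^2 \<le> norm (w$i) * (b / s)"
        using mult_left_mono[OF h1 norm_ge_zero[of "w$i"]] by (simp add: power2_eq_square)
    qed
    also have "\<dots> = l1norm w * b / s" unfolding l1norm_def by (simp add: sum_distrib_right sum_divide_distrib)
    finally have h: "(norm w)^2 \<le> l1norm w * b / s" .
    have "(norm w * sqrt s)^2 = (norm w)^2 * s" by (simp add: power_mult_distrib)
    also have "\<dots> \<le> l1norm w * b" using h s by (simp add: field_simps)
    also have "\<dots> \<le> (b + l1norm w)^2" using b0 l10 by (simp add: power2_eq_square algebra_simps)
    finally have "norm w * sqrt s \<le> b + l1norm w"
      using b0 l10 by (meson add_nonneg_nonneg power2_le_imp_le)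
    moreover have "norm (A *v w) \<le> U * norm w" using sp True by simp
    ultimately have "norm (A *v w) * sqrt s \<le> U * norm w * sqrt s \<and> U * norm w * sqrt s \<le> U * (b + l1norm w)"
      using U sq by (simp add: mult_right_mono mult.assoc mult_left_mono)
    then show ?thesis by linarith
  next
    case False
    obtain T where T: "card T \<le> s" "\<And>T'. card T' \<le> s \<Longrightarrow> (\<Sum>i\<in>T'. norm (w$i)) \<le> (\<Sum>i\<in>T. norm (w$i))"
      using exists_max_set by blast
    have cT: "card T = s"
    proof (rule ccontr)
      assume "card T \<noteq> s"
      then have "card T < s" using T(1) by simp
      then have "\<And>j. j \<notin> T \<Longrightarrow> w $ j = 0" using top_set_small[OF T] by force
      then have "{i. w$i \<noteq> 0} \<subseteq> T" by auto
      then have "l0norm w \<le> card T" unfolding l0norm_def by (simp add: card_mono)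
      then show False using False \<open>card T < s\<close> by simp
    qed
    define w1 where "w1 = restr T w"
    define w2 where "w2 = restr (-T) w"
    define b2 where "b2 = (\<Sum>i\<in>T. norm (w$i))"
    have wsplit: "w = w1 + w2" unfolding w1_def w2_def by (simp add: vec_eq_iff)
    have e2: "real s * norm (w2 $ j) \<le> b2" for j
    proof (cases "j \<in> T")
      case True then show ?thesis by (simp add: w2_def b2_def sum_nonneg)
    next
      case False
      have "(\<Sum>i\<in>T. norm (w$j)) \<le> (\<Sum>i\<in>T. norm (w$i))"
        by (rule sum_mono) (use top_set_swap[OF T] False in auto)
      then show ?thesis using False cT by (simp add: w2_def b2_def)
    qed
    have "T \<noteq> {}" using cT s by auto
    then obtain i0 where "i0 \<in> T" by auto
    have "\<exists>i\<in>T. w$i \<noteq> 0"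
    proof (rule ccontr)
      assume nt: "\<not> ?thesis"
      then have "w $ i0 = 0" using \<open>i0 \<in> T\<close> by auto
      then have "w $ j = 0" for j
        using top_set_swap[OF T \<open>i0 \<in> T\<close>, of j] nt by (cases "j \<in> T") auto
      then have "l0norm w = 0" unfolding l0norm_def by simp
      then show False using False by simp
    qed
    then have "{i. w2$i \<noteq> 0} \<subset> {i. w$i \<noteq> 0}" unfolding w2_def by auto
    then have lt: "l0norm w2 < l0norm w" unfolding l0norm_def by (simp add: psubset_card_mono)
    have IH: "norm (A *v w2) * sqrt s \<le> U * (b2 + l1norm w2)"
      using less.hyps[OF lt e2] by blast
    have "b2 + l1norm w2 = l1norm w" unfolding b2_def w2_def l1norm_restr
      by (rule l1norm_split[symmetric])
    with IH have IH2: "norm (A *v w2) * sqrt s \<le> U * l1norm w" by simp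
    have n1: "norm (A *v w1) \<le> U * norm w1"
      using sp l0norm_restr[of T w] cT unfolding w1_def by simp
    have "(norm w1)^2 = (\<Sum>i\<in>T. (norm (w$i))^2)" unfolding w1_def by (rule norm_restr_sq)
    also have "\<dots> \<le> (\<Sum>i\<in>T. (b / s)^2)"
    proof (rule sum_mono)
      fix i
      have "norm (w$i) \<le> b / s" using less.prems[of i] s by (simp add: field_simps)
      then show "(norm (w$i))^2 \<le> (b / s)^2" by (simp add: power_mono)
    qed
    also have "\<dots> = s * (b/s)^2" using cT by simp
    finally have "(norm w1)^2 * s \<le> s * (b/s)^2 * s" by (simp add: mult_right_mono)
    then have "(norm w1 * sqrt s)^2 \<le> s * (b/s)^2 * s" by (simp add: power_mult_distrib)
    also have "\<dots> = b^2" using s by (simp add: field_simps power2_eq_square)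
    finally have "norm w1 * sqrt s \<le> b" using b0 by (meson power2_le_imp_le)
    then have p1: "norm (A *v w1) * sqrt s \<le> U * b"
      using n1 U sq by (smt (verit) mult_left_mono mult_right_mono mult.assoc)
    have "norm (A *v w) \<le> norm (A *v w1) + norm (A *v w2)"
      using wsplit by (metis matrix_vector_right_distrib norm_triangle_ineq)
    then have "norm (A *v w) * sqrt s \<le> norm (A *v w1) * sqrt s + norm (A *v w2) * sqrt s"
      using sq by (simp add: distrib_right[symmetric] mult_right_mono)
    with p1 IH2 show ?thesis by (simp add: distrib_left)
  qed
qed



lemma alg:
  fixes L U r K Sq \<sigma> sig \<eta> a d P1 P2 :: real
  assumes L: "L > 0" and LU: "L \<le> U" and r: "r > 0" and rt: "r > 2 * (U/L)^2"
    and K: "K > 0" and Sq: "Sq > 0" and KS: "(r + 2) * K^2 \<le> Sq^2"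
    and \<sigma>: "\<sigma> \<ge> 0" and \<eta>: "\<eta> \<ge> 0" and d: "d \<ge> 0"
    and h1: "L * d \<le> U * (a + \<sigma>) / Sq + 2 * \<eta>"
    and h2: "a \<le> K * d + \<sigma>" and sg: "\<sigma> \<le> sig"
    and p1: "P1 \<le> K * d + a + \<sigma>" and p2: "P2 \<le> d + (a + \<sigma>) / Sq"
  shows "P1 \<le> corC1 r L U * sig + corD1 r L U * K * \<eta> \<and>
         P2 \<le> corC2 r L U * sig / K + corD2 r L U * \<eta>"
proof -
  define t where "t = U / L"
  define q where "q = K / Sq"
  define s2r where "s2r = sqrt (2 / r)"
  define \<rho> where "\<rho> = t * s2r"
  define \<theta> where "\<theta> = t * q"
  have U0: "U > 0" using L LU by simp
  have t1: "t \<ge> 1" using L LU by (simp add: t_def)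
  have rt': "r > 2 * t^2" using rt by (simp add: t_def)
  have r2: "r > 2" using rt' t1 by (smt (verit) one_le_power)
  have q0: "q > 0" using K Sq by (simp add: q_def)
  have qsq: "q^2 * (r + 2) \<le> 1" using KS Sq by (simp add: q_def power_divide field_simps)
  have s2r0: "s2r > 0" using r by (simp add: s2r_def)
  have s2rsq: "s2r^2 = 2 / r" using r by (simp add: s2r_def)
  have "q^2 \<le> s2r^2"
  proof -
    have "q^2 \<le> 1 / (r + 2)" using qsq r by (simp add: field_simps)
    also have "\<dots> \<le> 2 / r" using r by (simp add: field_simps)
    finally show ?thesis using s2rsq by simp
  qed
  then have qs2r: "q \<le> s2r" using s2r0 by (meson less_imp_le power2_le_imp_le)
  have q2: "2 * q \<le> 1"
  proof -
    have "q^2 * 4 \<le> q^2 * (r + 2)" using r2 by (intro mult_left_mono) auto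
    then have "(2*q)^2 \<le> 1^2" using qsq by (simp add: power_mult_distrib)
    then show ?thesis by (meson zero_le_one power2_le_imp_le)
  qed
  have \<rho>1: "\<rho> < 1"
  proof -
    have "\<rho>^2 = t^2 * (2 / r)" by (simp add: \<rho>_def power_mult_distrib s2rsq)
    also have "\<dots> < 1" using rt' r by (simp add: field_simps)
    finally have "\<rho>^2 < 1^2" by simp
    then show ?thesis by (meson zero_le_one power2_less_imp_less)
  qed
  have \<theta>\<rho>: "\<theta> \<le> \<rho>" unfolding \<theta>_def \<rho>_def using qs2r t1 by (simp add: mult_left_mono)
  define g where "g = 1 / (1 - \<theta>)"
  define G where "G = 1 / (1 - \<rho>)"
  have g0: "g > 0" using \<theta>\<rho> \<rho>1 by (simp add: g_def)
  have gG: "g \<le> G" unfolding g_def G_def using \<theta>\<rho> \<rho>1 by (simp add: frac_le)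
  define M where "M = 2 * t * q * (\<sigma> / K) + 2 * \<eta> / L"
  have "L * d \<le> U * (K * d + 2 * \<sigma>) / Sq + 2 * \<eta>"
  proof -
    have "U * (a + \<sigma>) / Sq \<le> U * (K * d + 2 * \<sigma>) / Sq"
      using h2 U0 Sq by (intro divide_right_mono mult_left_mono) auto
    then show ?thesis using h1 by linarith
  qed
  then have "d \<le> (U * (K * d + 2 * \<sigma>) / Sq + 2 * \<eta>) / L" using L by (simp add: field_simps)
  also have "\<dots> = \<theta> * d + M"
    unfolding \<theta>_def M_def t_def q_def using L K Sq by (simp add: field_simps)
  finally have "d * (1 - \<theta>) \<le> M" by (simp add: algebra_simps)
  then have dM: "d \<le> M * g" using \<theta>\<rho> \<rho>1 unfolding g_def by (simp add: field_simps)
  have X: "\<sigma> / K \<le> sig / K" "\<sigma> / K \<ge> 0" using sg K \<sigma> by (simp_all add: divide_right_mono)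
  have M0: "M \<ge> 0" unfolding M_def
    by (intro add_nonneg_nonneg mult_nonneg_nonneg divide_nonneg_pos) (use t1 q0 X \<eta> L \<sigma> K in auto)
  have "P2 \<le> d * (1 + q) + 2 * q * (\<sigma> / K)"
  proof -
    have "(a + \<sigma>) / Sq \<le> (K * d + 2 * \<sigma>) / Sq" using h2 Sq by (simp add: divide_right_mono)
    also have "\<dots> = q * d + 2 * q * (\<sigma> / K)" unfolding q_def using K Sq by (simp add: field_simps)
    finally show ?thesis using p2 by (simp add: algebra_simps)
  qed
  also have "\<dots> \<le> M * g * (1 + q) + 2 * q * (\<sigma> / K)"
    using dM q0 by (simp add: mult_right_mono)
  also have "\<dots> = (\<sigma> / K) * (2 * t * q * (1 + q) * g + 2 * q) + \<eta> * ((1 / L) * (2 * (1 + q) * g))"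
    unfolding M_def by (simp add: algebra_simps add_divide_distrib)
  also have "\<dots> \<le> (sig / K) * corC2 r L U + \<eta> * corD2 r L U"
  proof (intro add_mono mult_mono)
    have isr: "1 / sqrt (r / 2) = s2r" unfolding s2r_def using r by (simp add: real_sqrt_divide)
    have sr0: "1 / sqrt r \<ge> 0" using r by simp
    have "2 * t * q * (1 + q) * g \<le> t * (1 / sqrt r + 1) * ((1 + s2r) * G)"
    proof -
      have a1: "2 * q \<le> 1 / sqrt r + 1" using q2 sr0 by linarith
      have a2: "(1 + q) * g \<le> (1 + s2r) * G" using qs2r gG g0 q0 by (intro mult_mono) auto
      have "2 * q * ((1 + q) * g) \<le> (1 / sqrt r + 1) * ((1 + s2r) * G)"
        by (rule mult_mono[OF a1 a2]) (use sr0 q0 g0 in auto)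
      then have "t * (2 * q * ((1 + q) * g)) \<le> t * ((1 / sqrt r + 1) * ((1 + s2r) * G))"
        using t1 by (intro mult_left_mono) auto
      then show ?thesis by (simp add: algebra_simps)
    qed
    moreover have "2 * q \<le> 1 / sqrt r + 1" using q2 sr0 by linarith
    ultimately show "2 * t * q * (1 + q) * g + 2 * q \<le> corC2 r L U"
      unfolding corC2_def isr using \<rho>1 by (simp add: G_def \<rho>_def t_def s2r_def)
    have "2 * (1 + q) * g \<le> 2 * (1 + s2r) * G" by (rule mult_mono[OF _ gG]) (use qs2r q0 g0 in auto)
    then have "(1 / L) * (2 * (1 + q) * g) \<le> (1 / L) * (2 * (1 + s2r) * G)"
      by (rule mult_left_mono) (use L in simp)
    moreover have "corD2 r L U = (1 / L) * (2 * (1 + s2r) * G)"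
      unfolding corD2_def isr G_def \<rho>_def t_def s2r_def by simp
    ultimately show "(1 / L) * (2 * (1 + q) * g) \<le> corD2 r L U" by simp
  qed (use X \<eta> t1 q0 g0 L in auto)
  finally have P2: "P2 \<le> corC2 r L U * sig / K + corD2 r L U * \<eta>" by (simp add: algebra_simps)
  have "P1 \<le> 2 * K * d + 2 * \<sigma>" using p1 h2 by simp
  also have "\<dots> \<le> 2 * K * (M * g) + 2 * \<sigma>" using dM K by simp
  also have "\<dots> = \<sigma> * (4 * t * q * g + 2) + K * \<eta> * ((1 / L) * (4 * g))"
    unfolding M_def using K by (simp add: field_simps)
  also have "\<dots> \<le> sig * corC1 r L U + K * \<eta> * corD1 r L U"
  proof (intro add_mono mult_mono)
    have sr22: "sqrt (2 + r) \<ge> 2" using r2 by (simp add: real_le_rsqrt)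
    have "4 * t * q * g \<le> 2 * t * (1 / sqrt r + 1) * sqrt (2 + r) * G"
    proof -
      have "2 * q \<le> (1 / sqrt r + 1) * sqrt (2 + r)"
      proof -
        have "1 \<le> (1 / sqrt r + 1) * 1" using r by simp
        also have "\<dots> \<le> (1 / sqrt r + 1) * sqrt (2 + r)" using sr22 r by (intro mult_left_mono) auto
        finally show ?thesis using q2 by linarith
      qed
      then have "2 * q * g \<le> (1 / sqrt r + 1) * sqrt (2 + r) * G"
        by (rule mult_mono[OF _ gG]) (use g0 q0 r in auto)
      then have "2 * t * (2 * q * g) \<le> 2 * t * ((1 / sqrt r + 1) * sqrt (2 + r) * G)"
        using t1 by (intro mult_left_mono) auto
      then show ?thesis by (simp add: algebra_simps)
    qed
    then show "4 * t * q * g + 2 \<le> corC1 r L U"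
      unfolding corC1_def using \<rho>1 by (simp add: G_def \<rho>_def t_def s2r_def)
    have "4 * g \<le> 2 * sqrt (2 + r) * G" by (rule mult_mono[OF _ gG]) (use sr22 g0 r in auto)
    then have "(1 / L) * (4 * g) \<le> (1 / L) * (2 * sqrt (2 + r) * G)"
      by (rule mult_left_mono) (use L in simp)
    moreover have "corD1 r L U = (1 / L) * (2 * sqrt (2 + r) * G)"
      unfolding corD1_def G_def \<rho>_def t_def s2r_def by simp
    ultimately show "(1 / L) * (4 * g) \<le> corD1 r L U" by simp
  qed (use \<sigma> sg K \<eta> t1 q0 g0 L in auto)
  finally have P1: "P1 \<le> corC1 r L U * sig + corD1 r L U * K * \<eta>" by (simp add: algebra_simps)
  show ?thesis using P1 P2 by simp
qed



lemma l1norm_nonneg: "l1norm x \<ge> 0"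
  unfolding l1norm_def by (simp add: sum_nonneg)

lemma pdist_le:
  fixes c :: "'a::real_normed_field"
  assumes "\<And>z. N z \<ge> 0" "norm c = 1"
  shows "pdist N x y \<le> N (x - c *s y)"
  unfolding pdist_def
  by (rule cInf_lower) (use assms in \<open>auto intro!: bdd_belowI[of _ 0]\<close>)

lemma pdist_ge:
  fixes x y :: "'a::real_normed_field ^'n"
  assumes "\<And>c. norm c = 1 \<Longrightarrow> B \<le> N (x - c *s y)"
  shows "B \<le> pdist N x y"
  unfolding pdist_def
proof (rule cInf_greatest)
  show "(\<lambda>c. N (x - c *s y)) ` {c. norm c = 1} \<noteq> {}"
    by (auto intro!: exI[of _ 1])
qed (use assms in auto)

lemma pdist_nonneg:
  fixes x y :: "'a::real_normed_field ^'n"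
  assumes "\<And>z. N z \<ge> 0"
  shows "pdist N x y \<ge> 0"
  by (rule pdist_ge) (use assms in auto)

lemma norm_smult1:
  fixes c :: "'a::real_normed_field" and y :: "'a ^'n"
  assumes "norm c = 1"
  shows "norm (c *s y) = norm y"
  unfolding norm_vec_def by (rule L2_set_cong) (auto simp: norm_mult assms)

lemma sigma1_ge:
  fixes x :: "'a::real_normed_field ^'n"
  assumes T: "card T \<le> k" "\<And>T'. card T' \<le> k \<Longrightarrow> (\<Sum>i\<in>T'. norm (x$i)) \<le> (\<Sum>i\<in>T. norm (x$i))"
  shows "(\<Sum>i\<in>-T. norm (x$i)) \<le> sigma1 k x"
  unfolding sigma1_def
proof (rule cInf_greatest)
  show "(\<lambda>z. pdist l1norm x z) ` {z. l0norm z \<le> k} \<noteq> {}"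
    by (auto intro!: exI[of _ 0] simp: l0norm_def)
next
  fix m assume "m \<in> (\<lambda>z. pdist l1norm x z) ` {z. l0norm z \<le> k}"
  then obtain z where z: "l0norm z \<le> k" "m = pdist l1norm x z" by auto
  define Z where "Z = {i. z$i \<noteq> 0}"
  have cZ: "card Z \<le> k" using z(1) by (simp add: Z_def l0norm_def)
  have "(\<Sum>i\<in>-T. norm (x$i)) \<le> pdist l1norm x z"
  proof (rule pdist_ge)
    fix c :: 'a assume c: "norm c = 1"
    have "(\<Sum>i\<in>-T. norm (x$i)) = l1norm x - (\<Sum>i\<in>T. norm (x$i))"
      using l1norm_split[of x T] by simp
    also have "\<dots> \<le> l1norm x - (\<Sum>i\<in>Z. norm (x$i))" using T(2)[OF cZ] by simp
    also have "\<dots> = (\<Sum>i\<in>-Z. norm (x$i))" using l1norm_split[of x Z] by simp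
    also have "\<dots> = (\<Sum>i\<in>-Z. norm ((x - c *s z)$i))"
      by (rule sum.cong) (auto simp: Z_def)
    also have "\<dots> \<le> l1norm (x - c *s z)"
      using l1norm_split[of "x - c *s z" Z] by (simp add: sum_nonneg)
    finally show "(\<Sum>i\<in>-T. norm (x$i)) \<le> l1norm (x - c *s z)" .
  qed
  then show "(\<Sum>i\<in>-T. norm (x$i)) \<le> m" using z by simp
qed



lemma main_generic:
  fixes A :: "'a::real_normed_field ^'n^'m" and x xs :: "'a^'n" and e :: "real^'m"
    and k :: nat and r L U \<eta> :: real
  assumes bl: "phaseless_biLip A {x. real (l0norm x) \<le> (r + 4) * real k} L U"
    and k: "1 \<le> k" and r: "r > 0" and rt: "r > 2 * (U/L)^2"
    and \<eta>: "\<eta> \<ge> 0" and e: "l2norm e \<le> \<eta>" and xs: "xs \<in> Delta1 A \<eta> (absAx A x + e)"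
  shows "pdist l1norm xs x \<le> corC1 r L U * sigma1 k x + corD1 r L U * sqrt (real k) * \<eta> \<and>
         pdist l2norm xs x \<le> corC2 r L U * sigma1 k x / sqrt (real k) + corD2 r L U * \<eta>"
proof -
  let ?X = "{x :: 'a^'n. real (l0norm x) \<le> (r + 4) * real k}"
  have L: "L > 0" and U: "U > 0"
    and Lo: "\<And>u v. u \<in> ?X \<Longrightarrow> v \<in> ?X \<Longrightarrow> L * pdist l2norm u v \<le> l2norm (absAx A u - absAx A v)"
    and Up: "\<And>u v. u \<in> ?X \<Longrightarrow> v \<in> ?X \<Longrightarrow> l2norm (absAx A u - absAx A v) \<le> U * pdist l2norm u v"
    using bl unfolding phaseless_biLip_def by auto
  have pd0: "pdist l2norm z 0 = norm z" for z :: "'a^'n"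
  proof -
    have "(\<lambda>c. l2norm (z - c *s 0)) ` {c :: 'a. norm c = 1} = {norm z}"
      by (auto simp: l2norm_eq intro!: image_eqI[of _ _ 1])
    then show ?thesis unfolding pdist_def by simp
  qed
  have absAx0: "absAx A 0 = 0" by (simp add: absAx_def vec_eq_iff)
  have X0: "0 \<in> ?X" using r by (simp add: l0norm_def)
  have UpZ: "norm (A *v z) \<le> U * norm z" if "z \<in> ?X" for z
    using Up[OF that X0] by (simp add: pd0 absAx0 absAx_l2)
  have LoZ: "L * norm z \<le> norm (A *v z)" if "z \<in> ?X" for z
    using Lo[OF that X0] by (simp add: pd0 absAx0 absAx_l2)
  have LU: "L \<le> U"
  proof -
    define z where "z = axis (undefined :: 'n) (1 :: 'a)"
    have "{i. z $ i \<noteq> 0} = {undefined}" by (auto simp: z_def axis_def)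
    then have "l0norm z = 1" by (simp add: l0norm_def)
    have k1: "real k \<ge> 1" using k by simp
    have "r + 4 \<le> (r + 4) * real k" using mult_left_mono[of 1 "real k" "r+4"] k1 r by simp
    then have "1 \<le> (r + 4) * real k" using r by linarith
    then have zX: "z \<in> ?X" using \<open>l0norm z = 1\<close> by simp
    have "z \<noteq> 0" by (simp add: z_def)
    then have nz: "norm z > 0" by simp
    have "L * norm z \<le> U * norm z" using LoZ[OF zX] UpZ[OF zX] by linarith
    then show ?thesis using nz by simp
  qed
  define s where "s = nat \<lceil>(r + 2) * k\<rceil>"
  have s_ge: "real s \<ge> (r + 2) * k" unfolding s_def by linarith
  have s_lt: "real s \<le> (r + 2) * k + 1"
  proof -
    have "(r + 2) * k \<ge> 0" using r by simp
    then have "real s = of_int \<lceil>(r + 2) * k\<rceil>" unfolding s_def by simp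
    then show ?thesis using of_int_ceiling_le_add_one[of "(r + 2) * k"] by simp
  qed
  have "r + 2 \<le> (r + 2) * real k" using mult_left_mono[of 1 "real k" "r+2"] k r by simp
  then have "real s > 0" using s_ge r by linarith
  then have s1: "s \<ge> 1" by simp
  have ks: "real k + real s \<le> (r + 4) * k" using s_lt k by (simp add: algebra_simps)
  have spU: "norm (A *v z) \<le> U * norm z" if "l0norm z \<le> s" for z
  proof -
    have "real (l0norm z) \<le> real s" using that by simp
    then have "z \<in> ?X" using ks by simp
    then show ?thesis by (rule UpZ)
  qed
  have spI: "norm (mat 1 *v z) \<le> 1 * norm z" for z :: "'a^'n" by simp
  have xs1: "l2norm (absAx A xs - (absAx A x + e)) \<le> \<eta>"
    and xs2: "\<And>w. l2norm (absAx A w - (absAx A x + e)) \<le> \<eta> \<Longrightarrow> l1norm xs \<le> l1norm w"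
    using xs unfolding Delta1_def by auto
  have l1x: "l1norm xs \<le> l1norm x" using xs2[of x] e by (simp add: l2norm_eq)
  have obs: "norm (absAx A xs - absAx A x) \<le> 2 * \<eta>"
  proof -
    have "absAx A xs - absAx A x = (absAx A xs - (absAx A x + e)) + e" by simp
    then have "norm (absAx A xs - absAx A x) \<le> norm (absAx A xs - (absAx A x + e)) + norm e"
      by (metis norm_triangle_ineq)
    then show ?thesis using xs1 e by (simp add: l2norm_eq)
  qed
  obtain T0 where T0: "card T0 \<le> k" "\<And>T'. card T' \<le> k \<Longrightarrow> (\<Sum>i\<in>T'. norm (x$i)) \<le> (\<Sum>i\<in>T0. norm (x$i))"
    using exists_max_set by blast
  define \<sigma> where "\<sigma> = (\<Sum>i\<in>-T0. norm (x$i))"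
  have \<sigma>sig: "\<sigma> \<le> sigma1 k x" unfolding \<sigma>_def by (rule sigma1_ge[OF T0])
  have \<sigma>0: "\<sigma> \<ge> 0" unfolding \<sigma>_def by (simp add: sum_nonneg)
  define a where "a = (\<Sum>i\<in>-T0. norm (xs$i))"
  define w0 where "w0 = restr (-T0) xs"
  define z0 where "z0 = restr (-T0) x"
  obtain T1 where T1: "card T1 \<le> s" "\<And>j. real s * norm (restr (-T1) w0 $ j) \<le> (\<Sum>i\<in>T1. norm (w0$i))"
    using split_top by blast
  obtain T2 where T2: "card T2 \<le> s" "\<And>j. real s * norm (restr (-T2) z0 $ j) \<le> (\<Sum>i\<in>T2. norm (z0$i))"
    using split_top by blast
  define tx where "tx = restr (-T1) w0"
  define ty where "ty = restr (-T2) z0"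
  define u where "u = xs - tx"
  define v where "v = x - ty"
  have la: "(\<Sum>i\<in>T1. norm (w0$i)) + l1norm tx = a"
    unfolding tx_def l1norm_restr a_def using l1norm_split[of w0 T1] by (simp add: w0_def l1norm_restr)
  have ls: "(\<Sum>i\<in>T2. norm (z0$i)) + l1norm ty = \<sigma>"
    unfolding ty_def l1norm_restr \<sigma>_def using l1norm_split[of z0 T2] by (simp add: z0_def l1norm_restr)
  have shA1: "norm (A *v tx) * sqrt s \<le> U * a"
    using shelling[OF s1 _ spU, of tx "\<Sum>i\<in>T1. norm (w0$i)"] T1(2) U la by (simp add: tx_def)
  have shI1: "norm tx * sqrt s \<le> a"
    using shelling[OF s1 _ spI, of tx "\<Sum>i\<in>T1. norm (w0$i)"] T1(2) la by (simp add: tx_def)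
  have shA2: "norm (A *v ty) * sqrt s \<le> U * \<sigma>"
    using shelling[OF s1 _ spU, of ty "\<Sum>i\<in>T2. norm (z0$i)"] T2(2) U ls by (simp add: ty_def)
  have shI2: "norm ty * sqrt s \<le> \<sigma>"
    using shelling[OF s1 _ spI, of ty "\<Sum>i\<in>T2. norm (z0$i)"] T2(2) ls by (simp add: ty_def)
  have u_eq: "u = restr (T0 \<union> T1) xs" unfolding u_def tx_def w0_def by (simp add: vec_eq_iff)
  have v_eq: "v = restr (T0 \<union> T2) x" unfolding v_def ty_def z0_def by (simp add: vec_eq_iff)
  have uX: "u \<in> ?X"
  proof -
    have "l0norm u \<le> card (T0 \<union> T1)" unfolding u_eq by (rule l0norm_restr)
    also have "\<dots> \<le> card T0 + card T1" by (rule card_Un_le)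
    also have "\<dots> \<le> k + s" using T0(1) T1(1) by simp
    finally have "real (l0norm u) \<le> real k + real s" by simp
    then show ?thesis using ks by simp
  qed
  have vX: "v \<in> ?X"
  proof -
    have "l0norm v \<le> card (T0 \<union> T2)" unfolding v_eq by (rule l0norm_restr)
    also have "\<dots> \<le> card T0 + card T2" by (rule card_Un_le)
    also have "\<dots> \<le> k + s" using T0(1) T2(1) by simp
    finally have "real (l0norm v) \<le> real k + real s" by simp
    then show ?thesis using ks by simp
  qed
  define d where "d = pdist l2norm u v"
  have d0: "d \<ge> 0" unfolding d_def by (rule pdist_nonneg) (simp add: l2norm_eq)
  have sq0: "sqrt (real s) > 0" using s1 by simp
  have h1: "L * d \<le> U * (a + \<sigma>) / sqrt s + 2 * \<eta>"
  proof -
    have "L * d \<le> l2norm (absAx A u - absAx A v)" unfolding d_def by (rule Lo[OF uX vX])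
    also have "\<dots> = norm ((absAx A u - absAx A xs) + (absAx A xs - absAx A x) + (absAx A x - absAx A v))"
      by (simp add: l2norm_eq)
    also have "\<dots> \<le> norm (absAx A u - absAx A xs) + norm (absAx A xs - absAx A x) + norm (absAx A x - absAx A v)"
      by (rule order_trans[OF norm_triangle_ineq], rule add_right_mono, rule norm_triangle_ineq)
    also have "\<dots> \<le> norm (A *v tx) + 2 * \<eta> + norm (A *v ty)"
    proof -
      have "norm (absAx A u - absAx A xs) = norm (absAx A xs - absAx A u)"
        by (rule norm_minus_commute)
      also have "\<dots> \<le> norm (A *v (xs - u))"
        using absAx_diff[of A xs u] by (simp add: l2norm_eq)
      also have "\<dots> = norm (A *v tx)" unfolding u_def by simp
      finally have 1: "norm (absAx A u - absAx A xs) \<le> norm (A *v tx)" .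
      have "norm (absAx A x - absAx A v) \<le> norm (A *v (x - v))"
        using absAx_diff[of A x v] by (simp add: l2norm_eq)
      also have "\<dots> = norm (A *v ty)" unfolding v_def by simp
      finally have 2: "norm (absAx A x - absAx A v) \<le> norm (A *v ty)" .
      show ?thesis using 1 2 obs by linarith
    qed
    also have "\<dots> \<le> U * a / sqrt s + 2 * \<eta> + U * \<sigma> / sqrt s"
      using shA1 shA2 sq0 by (simp add: field_simps)
    also have "\<dots> = U * (a + \<sigma>) / sqrt s + 2 * \<eta>" by (simp add: distrib_left add_divide_distrib)
    finally show ?thesis .
  qed
  have T0part: "(\<Sum>i\<in>T0. norm (xs$i - c * x$i)) \<le> sqrt k * norm (u - c *s v)" for c
  proof -
    have "(\<Sum>i\<in>T0. norm (xs$i - c * x$i)) \<le> sqrt (card T0) * sqrt (\<Sum>i\<in>T0. (norm (xs$i - c * x$i))^2)"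
      by (rule sum_le_sqrt_card) simp
    also have "(\<Sum>i\<in>T0. (norm (xs$i - c * x$i))^2) = (norm (restr T0 (u - c *s v)))^2"
      unfolding norm_restr_sq u_eq v_eq by (rule sum.cong) auto
    also have "sqrt ((norm (restr T0 (u - c *s v)))^2) \<le> norm (u - c *s v)"
      by simp (rule norm_le_componentwise_cart, simp)
    finally have "(\<Sum>i\<in>T0. norm (xs$i - c * x$i)) \<le> sqrt (card T0) * norm (u - c *s v)"
      by (simp add: mult_left_mono)
    also have "\<dots> \<le> sqrt k * norm (u - c *s v)"
      using T0(1) by (intro mult_right_mono) auto
    finally show ?thesis .
  qed
  have h2: "a \<le> sqrt k * d + \<sigma>"
  proof -
    have sk: "sqrt (real k) > 0" using k by simp
    have "(a - \<sigma>) / sqrt k \<le> d" unfolding d_def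
    proof (rule pdist_ge)
      fix c :: 'a assume c: "norm c = 1"
      have "(\<Sum>i\<in>T0. norm (xs$i)) + a \<le> (\<Sum>i\<in>T0. norm (x$i)) + \<sigma>"
        using l1x l1norm_split[of xs T0] l1norm_split[of x T0] by (simp add: a_def \<sigma>_def)
      then have "a - \<sigma> \<le> (\<Sum>i\<in>T0. norm (x$i) - norm (xs$i))" by (simp add: sum_subtractf)
      also have "\<dots> \<le> (\<Sum>i\<in>T0. norm (xs$i - c * x$i))"
      proof (rule sum_mono)
        fix i
        have "norm (x$i) = norm (c * x$i)" by (simp add: norm_mult c)
        also have "\<dots> \<le> norm (xs$i) + norm (xs$i - c * x$i)"
          by (metis norm_triangle_sub add.commute norm_minus_commute)
        finally show "norm (x$i) - norm (xs$i) \<le> norm (xs$i - c * x$i)" by simp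
      qed
      also have "\<dots> \<le> sqrt k * norm (u - c *s v)" by (rule T0part)
      finally show "(a - \<sigma>) / sqrt k \<le> l2norm (u - c *s v)"
        using sk by (simp add: l2norm_eq field_simps)
    qed
    then show ?thesis using sk by (simp add: field_simps)
  qed
  have p2: "pdist l2norm xs x \<le> d + (a + \<sigma>) / sqrt s"
  proof -
    have "pdist l2norm xs x - (a + \<sigma>) / sqrt s \<le> d" unfolding d_def
    proof (rule pdist_ge)
      fix c :: 'a assume c: "norm c = 1"
      have "pdist l2norm xs x \<le> l2norm (xs - c *s x)" by (rule pdist_le) (auto simp: l2norm_eq c)
      also have "xs - c *s x = (u - c *s v) + tx - c *s ty"
        unfolding u_def v_def by (simp add: vec_eq_iff algebra_simps)
      also have "l2norm \<dots> \<le> norm (u - c *s v) + norm tx + norm (c *s ty)"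
        unfolding l2norm_eq
        by (rule order_trans[OF norm_triangle_ineq4], rule add_right_mono, rule norm_triangle_ineq)
      also have "norm (c *s ty) = norm ty" by (rule norm_smult1[OF c])
      finally have "pdist l2norm xs x \<le> norm (u - c *s v) + norm tx + norm ty" .
      moreover have "norm tx + norm ty \<le> (a + \<sigma>) / sqrt s"
        using shI1 shI2 sq0 by (simp add: field_simps)
      ultimately show "pdist l2norm xs x - (a + \<sigma>) / sqrt s \<le> l2norm (u - c *s v)"
        by (simp add: l2norm_eq)
    qed
    then show ?thesis by simp
  qed
  have p1: "pdist l1norm xs x \<le> sqrt k * d + a + \<sigma>"
  proof -
    have "pdist l1norm xs x - a - \<sigma> \<le> sqrt k * d"
    proof -
      have sk: "sqrt (real k) > 0" using k by simp
      have "(pdist l1norm xs x - a - \<sigma>) / sqrt k \<le> d" unfolding d_def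
      proof (rule pdist_ge)
        fix c :: 'a assume c: "norm c = 1"
        have "pdist l1norm xs x \<le> l1norm (xs - c *s x)" by (rule pdist_le) (auto simp: l1norm_nonneg c)
        also have "\<dots> = (\<Sum>i\<in>T0. norm (xs$i - c * x$i)) + (\<Sum>i\<in>-T0. norm (xs$i - c * x$i))"
          using l1norm_split[of "xs - c *s x" T0] by simp
        also have "(\<Sum>i\<in>-T0. norm (xs$i - c * x$i)) \<le> (\<Sum>i\<in>-T0. norm (xs$i) + norm (x$i))"
        proof (rule sum_mono)
          fix i
          show "norm (xs$i - c * x$i) \<le> norm (xs$i) + norm (x$i)"
            using norm_triangle_ineq4[of "xs$i" "c * x$i"] by (simp add: norm_mult c)
        qed
        also have "\<dots> = a + \<sigma>" by (simp add: a_def \<sigma>_def sum.distrib)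
        finally have "pdist l1norm xs x \<le> sqrt k * norm (u - c *s v) + a + \<sigma>"
          using T0part[of c] by simp
        then show "(pdist l1norm xs x - a - \<sigma>) / sqrt k \<le> l2norm (u - c *s v)"
          using sk by (simp add: l2norm_eq field_simps)
      qed
      then show ?thesis using sk by (simp add: field_simps)
    qed
    then show ?thesis by simp
  qed
  have KS: "(r + 2) * (sqrt (real k))^2 \<le> (sqrt (real s))^2" using s_ge by simp
  show ?thesis
    by (rule alg[OF L LU r rt _ sq0 KS \<sigma>0 \<eta> d0 h1 h2 \<sigma>sig p1 p2]) (use k in simp)
qed


theorem corollary2p4:
  fixes k :: nat and r L U :: real
  assumes "1 \<le> k" and "k \<le> CARD('n)" and "r > 0" and "L > 0" and "U > 0"
    and "r > 2 * (U / L)^2"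
  shows
   "(\<forall>A :: real ^ 'n ^ 'm.
      phaseless_biLip A {x. real (l0norm x) \<le> (r + 4) * real k} L U \<longrightarrow>
      (\<forall>(x :: real ^ 'n) (\<eta> :: real) (e :: real ^ 'm) xs.
         \<eta> \<ge> 0 \<longrightarrow> l2norm e \<le> \<eta> \<longrightarrow> xs \<in> Delta1 A \<eta> (absAx A x + e) \<longrightarrow>
         pdist l1norm xs x \<le> corC1 r L U * sigma1 k x + corD1 r L U * sqrt (real k) * \<eta> \<and>
         pdist l2norm xs x \<le> corC2 r L U * sigma1 k x / sqrt (real k) + corD2 r L U * \<eta>))
  \<and>
   (\<forall>A :: complex ^ 'n ^ 'm.
      phaseless_biLip A {x. real (l0norm x) \<le> (r + 4) * real k} L U \<longrightarrow>
      (\<forall>(x :: complex ^ 'n) (\<eta> :: real) (e :: real ^ 'm) xs.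
         \<eta> \<ge> 0 \<longrightarrow> l2norm e \<le> \<eta> \<longrightarrow> xs \<in> Delta1 A \<eta> (absAx A x + e) \<longrightarrow>
         pdist l1norm xs x \<le> corC1 r L U * sigma1 k x + corD1 r L U * sqrt (real k) * \<eta> \<and>
         pdist l2norm xs x \<le> corC2 r L U * sigma1 k x / sqrt (real k) + corD2 r L U * \<eta>))"
    using main_generic[where 'a=real and 'n='n and 'm='m, OF _ assms(1) assms(3) assms(6)]
        main_generic[where 'a=complex and 'n='n and 'm='m, OF _ assms(1) assms(3) assms(6)]
  by blast

end
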